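(* There exists a protocol that estimates the sharpness $\mathcal{S}(\{M_i\}_i)=\frac{1}{d}\sum_i\operatorname{Tr}(M_i^2)$ with constant additive error, and thus solves the black-box distinguishing task below with constant success probability, using $\mathcal{O}(1)$ queries, provided that the black box outputs both classical outcomes and post-measurement quantum states $\rho_i = K_i\rho K_i^\dagger/\operatorname{Tr}(K_i\rho K_i^\dagger)$, and the measurement operators $K_i$ are normal operators.
   Context: A quantum measurement on a $d$-dimensional system is described by measurement (Kraus) operators $\{K_i\}_i$ with $\sum_i K_i^\dagger K_i = \mathbb{I}$ and POVM $\{M_i = K_i^\dagger K_i\}_i$; outcome $i$ occurs with probability $\operatorname{Tr}(\rho K_i^\dagger K_i)$ and the post-measurement state is $\rho_i = K_i\rho K_i^\dagger/\operatorname{Tr}(K_i\rho K_i^\dagger)$. Black-box distinguishing task: given query access to a measurement device, distinguish between, with equal prior probability, (i) a device that outputs $i \in \{0,\dots,d-1\}$ uniformly at random and leaves the input state unchanged (sharpness $1/d$), and (ii) a device performing the projective measurement $\{\Pi_i = U |i\rangle\langle i| U^\dagger\}_{i=0}^{d-1}$ for an unknown Haar random unitary $U$, outputting $i$ and collapsing the input to the post-measurement state (sharpness $1$). The protocol: prepare the maximally mixed state $\mathbb{I}/d$, measure it and keep the post-measurement state, measure again with the same device, and record whether the two outcomes agree; the agreement probability equals the sharpness when $[K_i,K_i^\dagger]=0$. *)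

theory Defs
  imports Complex_Main "Jordan_Normal_Form.Matrix"
begin

definition cadj :: "complex mat \<Rightarrow> complex mat" where
  "cadj A = mat (dim_col A) (dim_row A) (\<lambda>(i,j). cnj (A $$ (j,i)))"

definition mtrace :: "complex mat \<Rightarrow> complex" where
  "mtrace A = (\<Sum>i<dim_row A. A $$ (i,i))"

definition is_measurement :: "nat \<Rightarrow> nat \<Rightarrow> (nat \<Rightarrow> complex mat) \<Rightarrow> bool" where
  "is_measurement d m K \<longleftrightarrow>
     (\<forall>i<m. K i \<in> carrier_mat d d) \<and>
     (\<forall>a<d. \<forall>b<d. (\<Sum>i<m. (cadj (K i) * K i) $$ (a,b)) = (1\<^sub>m d :: complex mat) $$ (a,b))"

definition normal_op :: "complex mat \<Rightarrow> bool" where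
  "normal_op A \<longleftrightarrow> A * cadj A = cadj A * A"

definition povm :: "(nat \<Rightarrow> complex mat) \<Rightarrow> nat \<Rightarrow> complex mat" where
  "povm K i = cadj (K i) * K i"

definition sharpness :: "nat \<Rightarrow> nat \<Rightarrow> (nat \<Rightarrow> complex mat) \<Rightarrow> real" where
  "sharpness d m K = (1 / real d) * (\<Sum>i<m. Re (mtrace (povm K i * povm K i)))"

definition outcome_prob :: "(nat \<Rightarrow> complex mat) \<Rightarrow> nat \<Rightarrow> complex mat \<Rightarrow> real" where
  "outcome_prob K i \<rho> = Re (mtrace (K i * \<rho> * cadj (K i)))"

definition post_state :: "(nat \<Rightarrow> complex mat) \<Rightarrow> nat \<Rightarrow> complex mat \<Rightarrow> complex mat" where
  "post_state K i \<rho> = (1 / mtrace (K i * \<rho> * cadj (K i))) \<cdot>\<^sub>m (K i * \<rho> * cadj (K i))"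

definition maxmixed :: "nat \<Rightarrow> complex mat" where
  "maxmixed d = (1 / of_nat d) \<cdot>\<^sub>m (1\<^sub>m d)"

text \<open>One round of the protocol (two queries): prepare I/d, measure, keep the
  post-measurement state, measure again; probability that the two outcomes agree.\<close>
definition agree_prob :: "nat \<Rightarrow> nat \<Rightarrow> (nat \<Rightarrow> complex mat) \<Rightarrow> real" where
  "agree_prob d m K =
     (\<Sum>i<m. outcome_prob K i (maxmixed d) * outcome_prob K i (post_state K i (maxmixed d)))"

text \<open>The protocol repeats the round N times independently (2N queries) and outputs the
  fraction k/N of agreeing rounds; k is Binomial(N, q) with q the agreement probability.
  \<open>est_prob N q P\<close> is the probability that the estimate k/N satisfies P.\<close>
definition est_prob :: "nat \<Rightarrow> real \<Rightarrow> (real \<Rightarrow> bool) \<Rightarrow> real" where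
  "est_prob N q P = (\<Sum>k\<in>{k. k \<le> N \<and> P (real k / real N)}.
                        real (N choose k) * q ^ k * (1 - q) ^ (N - k))"

text \<open>Device (i): outputs i in {0..d-1} uniformly and leaves the state unchanged:
  K_i = I / sqrt d.\<close>
definition random_device :: "nat \<Rightarrow> nat \<Rightarrow> complex mat" where
  "random_device d i = (complex_of_real (1 / sqrt (real d))) \<cdot>\<^sub>m (1\<^sub>m d)"

definition unitary_mat :: "nat \<Rightarrow> complex mat \<Rightarrow> bool" where
  "unitary_mat d U \<longleftrightarrow> U \<in> carrier_mat d d \<and> cadj U * U = 1\<^sub>m d"

definition proj_device :: "nat \<Rightarrow> complex mat \<Rightarrow> nat \<Rightarrow> complex mat" where
  "proj_device d U i = U * mat d d (\<lambda>(a,b). if a = i \<and> b = i then 1 else 0) * cadj U"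

end

theory Submission
  imports Defs "HOL-Probability.Hoeffding"
begin

lemma cadj_dims[simp]: "dim_row (cadj A) = dim_col A" "dim_col (cadj A) = dim_row A"
  unfolding cadj_def by simp_all

lemma cadj_carrier[simp]: "A \<in> carrier_mat n k \<Longrightarrow> cadj A \<in> carrier_mat k n"
  by (metis cadj_dims carrier_matD carrier_matI)

lemma cadj_index[simp]: "i < dim_col A \<Longrightarrow> j < dim_row A \<Longrightarrow> cadj A $$ (i,j) = cnj (A $$ (j,i))"
  by (simp add: cadj_def)

lemma cadj_mult: assumes "A \<in> carrier_mat n k" "B \<in> carrier_mat k l"
  shows "cadj (A * B) = cadj B * cadj A"
  using assms by (intro eq_matI) (auto simp: scalar_prod_def intro!: sum.cong)

lemma cadj_cadj[simp]: "cadj (cadj A) = A"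
  by (intro eq_matI) auto

lemma cadj_smult: "cadj (c \<cdot>\<^sub>m A) = cnj c \<cdot>\<^sub>m cadj A"
  by (intro eq_matI) auto

lemma cadj_one[simp]: "cadj (1\<^sub>m n) = 1\<^sub>m n"
  by (intro eq_matI) auto

lemma mtrace_comm: assumes "A \<in> carrier_mat n k" "B \<in> carrier_mat k n"
  shows "mtrace (A * B) = mtrace (B * A)"
proof -
  have "mtrace (A * B) = (\<Sum>i<n. \<Sum>j<k. A $$ (i,j) * B $$ (j,i))"
    using assms unfolding mtrace_def
    by (auto simp: scalar_prod_def atLeast0LessThan intro!: sum.cong)
  also have "\<dots> = (\<Sum>j<k. \<Sum>i<n. B $$ (j,i) * A $$ (i,j))"
    by (subst sum.swap) (simp add: mult.commute)
  also have "\<dots> = mtrace (B * A)"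
    using assms unfolding mtrace_def
    by (auto simp: scalar_prod_def atLeast0LessThan intro!: sum.cong)
  finally show ?thesis .
qed

lemma mtrace_smult: "A \<in> carrier_mat n n \<Longrightarrow> mtrace (c \<cdot>\<^sub>m A) = c * mtrace A"
  by (simp add: mtrace_def sum_distrib_left)

lemma mtrace_AAadj: assumes "A \<in> carrier_mat n k"
  shows "mtrace (A * cadj A) = of_real (\<Sum>a<n. \<Sum>b<k. (cmod (A $$ (a,b)))\<^sup>2)"
proof -
  have "mtrace (A * cadj A) = (\<Sum>a<n. \<Sum>b<k. A $$ (a,b) * cnj (A $$ (a,b)))"
    using assms unfolding mtrace_def
    by (auto simp: scalar_prod_def atLeast0LessThan intro!: sum.cong)
  also have "\<dots> = of_real (\<Sum>a<n. \<Sum>b<k. (cmod (A $$ (a,b)))\<^sup>2)"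
    by (simp only: complex_norm_square of_real_sum)
  finally show ?thesis .
qed

lemma AAadj_zero: assumes "A \<in> carrier_mat n k" "mtrace (A * cadj A) = 0"
  shows "A = 0\<^sub>m n k"
proof -
  have "(\<Sum>a<n. \<Sum>b<k. (cmod (A $$ (a,b)))\<^sup>2) = 0"
    using assms mtrace_AAadj[OF assms(1)] by (metis of_real_eq_0_iff)
  hence "\<forall>a<n. (\<Sum>b<k. (cmod (A $$ (a,b)))\<^sup>2) = 0"
    by (subst (asm) sum_nonneg_eq_0_iff) (auto intro: sum_nonneg)
  hence "\<forall>a<n. \<forall>b<k. (cmod (A $$ (a,b)))\<^sup>2 = 0"
    by (subst (asm) sum_nonneg_eq_0_iff) auto
  thus ?thesis using assms(1) by (intro eq_matI) auto
qed


lemma smult_smult_mat: "a \<cdot>\<^sub>m (b \<cdot>\<^sub>m A) = (a * b :: 'a :: semigroup_mult) \<cdot>\<^sub>m A"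
  by (intro eq_matI) (auto simp: mult.assoc)

lemma agree_term:
  assumes A: "K i \<in> carrier_mat d d" and nA: "normal_op (K i)" and d: "d > 0"
  shows "outcome_prob K i (maxmixed d) * outcome_prob K i (post_state K i (maxmixed d))
         = Re (mtrace (povm K i * povm K i)) / real d"
proof -
  let ?A = "K i"
  define H where "H = ?A * cadj ?A"
  have Hc: "H \<in> carrier_mat d d" using A by (simp add: H_def)
  have Ac: "cadj ?A \<in> carrier_mat d d" using A by simp
  have 1: "?A * maxmixed d * cadj ?A = (1 / of_nat d) \<cdot>\<^sub>m H"
  proof -
    have "?A * ((1 / of_nat d) \<cdot>\<^sub>m 1\<^sub>m d) = (1 / of_nat d) \<cdot>\<^sub>m ?A"
      using mult_smult_distrib[OF A one_carrier_mat] A by simp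
    then show ?thesis unfolding maxmixed_def H_def
      by (simp add: mult_smult_assoc_mat[OF A Ac])
  qed
  define T where "T = (\<Sum>a<d. \<Sum>b<d. (cmod (?A $$ (a,b)))\<^sup>2)"
  have T0: "T \<ge> 0" unfolding T_def by (intro sum_nonneg) auto
  have tT: "mtrace H = of_real T" unfolding H_def T_def by (rule mtrace_AAadj[OF A])
  have 2: "mtrace (?A * maxmixed d * cadj ?A) = (1 / of_nat d) * of_real T"
    unfolding 1 by (simp add: mtrace_smult[OF Hc] tT)
  have 3: "post_state K i (maxmixed d) = (1 / of_real T) \<cdot>\<^sub>m H"
  proof -
    have "post_state K i (maxmixed d) = ((1 / ((1 / of_nat d) * of_real T)) * (1 / of_nat d)) \<cdot>\<^sub>m H"
      unfolding post_state_def 2 unfolding 1 by (simp add: smult_smult_mat)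
    also have "(1 / ((1 / of_nat d) * of_real T)) * (1 / of_nat d) = (1 / of_real T :: complex)"
      using d by (cases "T = 0") (auto simp: field_simps)
    finally show ?thesis .
  qed
  have 4: "?A * post_state K i (maxmixed d) * cadj ?A = (1 / of_real T) \<cdot>\<^sub>m (?A * H * cadj ?A)"
    unfolding 3 using A Hc by (simp add: mult_smult_distrib[OF A Hc] mult_smult_assoc_mat[OF mult_carrier_mat[OF A Hc] Ac])
  have Mc: "povm K i \<in> carrier_mat d d" unfolding povm_def using A by (intro mult_carrier_mat[of _ d d]) auto
  have 5: "?A * H * cadj ?A = povm K i * povm K i"
  proof -
    have "?A * H * cadj ?A = ?A * (cadj ?A * ?A) * cadj ?A"
      using nA unfolding H_def normal_op_def by simp
    also have "\<dots> = (?A * cadj ?A) * ?A * cadj ?A"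
      by (simp only: assoc_mult_mat[symmetric, OF A Ac A])
    also have "\<dots> = (?A * cadj ?A) * (?A * cadj ?A)"
      by (rule assoc_mult_mat[OF mult_carrier_mat[OF A Ac] A Ac])
    also have "\<dots> = povm K i * povm K i"
      using nA unfolding povm_def normal_op_def by simp
    finally show ?thesis .
  qed
  have 6: "?A * H * cadj ?A = (?A * ?A) * cadj (?A * ?A)"
  proof -
    have "?A * H * cadj ?A = ((?A * ?A) * cadj ?A) * cadj ?A"
      unfolding H_def by (simp only: assoc_mult_mat[symmetric, OF A A Ac])
    also have "\<dots> = (?A * ?A) * (cadj ?A * cadj ?A)"
      by (rule assoc_mult_mat[OF mult_carrier_mat[OF A A] Ac Ac])
    finally show ?thesis using cadj_mult[OF A A] by simp
  qed
  define S where "S = (\<Sum>a<d. \<Sum>b<d. (cmod ((?A * ?A) $$ (a,b)))\<^sup>2)"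
  have sS: "mtrace (povm K i * povm K i) = of_real S"
    unfolding S_def 5[symmetric] 6 by (rule mtrace_AAadj) (use A in simp)
  show ?thesis
  proof (cases "T = 0")
    case True
    have "?A = 0\<^sub>m d d" using AAadj_zero[OF A] tT True unfolding H_def by simp
    hence "povm K i = 0\<^sub>m d d" unfolding povm_def by simp
    hence "mtrace (povm K i * povm K i) = 0" by (simp add: mtrace_def)
    thus ?thesis unfolding outcome_prob_def 2 using True by simp
  next
    case False
    have "outcome_prob K i (post_state K i (maxmixed d)) = S / T"
      unfolding outcome_prob_def 4 5 mtrace_smult[OF mult_carrier_mat[OF Mc Mc]] sS
      by simp
    moreover have "outcome_prob K i (maxmixed d) = T / real d"
      unfolding outcome_prob_def 2 by simp
    ultimately show ?thesis using False sS by simp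
  qed
qed


lemma povm_carrier: "K i \<in> carrier_mat d d \<Longrightarrow> povm K i \<in> carrier_mat d d"
  unfolding povm_def by (intro mult_carrier_mat[of _ d d]) auto

lemma povm_pair_nonneg:
  assumes Ki: "K i \<in> carrier_mat d d" and Kj: "K j \<in> carrier_mat d d"
  shows "Re (mtrace (povm K i * povm K j)) \<ge> 0"
proof -
  have Ai: "cadj (K i) \<in> carrier_mat d d" and Aj: "cadj (K j) \<in> carrier_mat d d"
    using Ki Kj by auto
  have Q: "cadj (K j) * K j \<in> carrier_mat d d" using Aj Kj by (rule mult_carrier_mat)
  have "povm K i * povm K j = cadj (K i) * (K i * (cadj (K j) * K j))"
    unfolding povm_def by (rule assoc_mult_mat[OF Ai Ki Q])
  hence "mtrace (povm K i * povm K j) = mtrace ((K i * (cadj (K j) * K j)) * cadj (K i))"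
    using mtrace_comm[OF Ai mult_carrier_mat[OF Ki Q]] by simp
  also have "K i * (cadj (K j) * K j) = (K i * cadj (K j)) * K j"
    by (rule assoc_mult_mat[symmetric, OF Ki Aj Kj])
  also have "(K i * cadj (K j)) * K j * cadj (K i) = (K i * cadj (K j)) * (K j * cadj (K i))"
    by (rule assoc_mult_mat[OF mult_carrier_mat[OF Ki Aj] Kj Ai])
  also have "K j * cadj (K i) = cadj (K i * cadj (K j))"
    using cadj_mult[OF Ki Aj] by simp
  also have "mtrace ((K i * cadj (K j)) * cadj (K i * cadj (K j))) =
      of_real (\<Sum>a<d. \<Sum>b<d. (cmod ((K i * cadj (K j)) $$ (a,b)))\<^sup>2)"
    by (rule mtrace_AAadj[OF mult_carrier_mat[OF Ki Aj]])
  finally show ?thesis by (simp add: sum_nonneg)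
qed

lemma mtrace_mult_entries:
  assumes "P \<in> carrier_mat d d" "Q \<in> carrier_mat d d"
  shows "mtrace (P * Q) = (\<Sum>a<d. \<Sum>b<d. P $$ (a,b) * Q $$ (b,a))"
  using assms unfolding mtrace_def
  by (auto simp: scalar_prod_def atLeast0LessThan intro!: sum.cong)

lemma povm_sum_right:
  assumes M: "is_measurement d m K" and i: "K i \<in> carrier_mat d d"
  shows "(\<Sum>j<m. mtrace (povm K i * povm K j)) = mtrace (povm K i)"
proof -
  have Kc: "\<forall>j<m. K j \<in> carrier_mat d d" using M by (simp add: is_measurement_def)
  have S: "\<And>a b. a < d \<Longrightarrow> b < d \<Longrightarrow> (\<Sum>j<m. povm K j $$ (a,b)) = (1\<^sub>m d :: complex mat) $$ (a,b)"
    using M unfolding is_measurement_def povm_def by auto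
  have "(\<Sum>j<m. mtrace (povm K i * povm K j)) =
        (\<Sum>j<m. \<Sum>a<d. \<Sum>b<d. povm K i $$ (a,b) * povm K j $$ (b,a))"
    using Kc by (intro sum.cong refl mtrace_mult_entries povm_carrier[of K _ d] i) auto
  also have "\<dots> = (\<Sum>a<d. \<Sum>b<d. povm K i $$ (a,b) * (\<Sum>j<m. povm K j $$ (b,a)))"
    by (simp add: sum_distrib_left sum.swap[of _ "{..<m}"])
  also have "\<dots> = (\<Sum>a<d. \<Sum>b<d. povm K i $$ (a,b) * (if b = a then 1 else 0))"
    by (intro sum.cong refl) (simp add: S)
  also have "\<dots> = (\<Sum>a<d. povm K i $$ (a,a))"
    by (simp add: if_distrib sum.delta' cong: if_cong)
  also have "\<dots> = mtrace (povm K i)"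
    using povm_carrier[of K i d, OF i] by (simp add: mtrace_def)
  finally show ?thesis .
qed

lemma povm_sum_trace:
  assumes M: "is_measurement d m K"
  shows "(\<Sum>i<m. mtrace (povm K i)) = of_nat d"
proof -
  have Kc: "\<forall>j<m. K j \<in> carrier_mat d d" using M by (simp add: is_measurement_def)
  have S: "\<And>a. a < d \<Longrightarrow> (\<Sum>j<m. povm K j $$ (a,a)) = 1"
    using M unfolding is_measurement_def povm_def by auto
  have "(\<Sum>i<m. mtrace (povm K i)) = (\<Sum>i<m. \<Sum>a<d. povm K i $$ (a,a))"
  proof (intro sum.cong refl)
    fix i assume "i \<in> {..<m}"
    hence "dim_row (povm K i) = d" using Kc povm_carrier[of K i d] by auto
    thus "mtrace (povm K i) = (\<Sum>a<d. povm K i $$ (a,a))" by (simp add: mtrace_def)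
  qed
  also have "\<dots> = (\<Sum>a<d. \<Sum>i<m. povm K i $$ (a,a))" by (rule sum.swap)
  also have "\<dots> = of_nat d" by (simp add: S)
  finally show ?thesis .
qed

lemma measurement_facts:
  assumes d: "d > 0" and M: "is_measurement d m K" and N: "\<forall>i<m. normal_op (K i)"
  shows "agree_prob d m K = sharpness d m K" "0 \<le> sharpness d m K" "sharpness d m K \<le> 1"
proof -
  have Kc: "\<And>j. j<m \<Longrightarrow> K j \<in> carrier_mat d d" using M by (simp add: is_measurement_def)
  show "agree_prob d m K = sharpness d m K"
    unfolding agree_prob_def sharpness_def
    by (simp add: agree_term Kc N d sum_divide_distrib)
  show "0 \<le> sharpness d m K"
    unfolding sharpness_def by (intro mult_nonneg_nonneg sum_nonneg povm_pair_nonneg[of K _ d] Kc) auto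
  have "(\<Sum>i<m. Re (mtrace (povm K i * povm K i))) \<le> (\<Sum>i<m. \<Sum>j<m. Re (mtrace (povm K i * povm K j)))"
    by (intro sum_mono member_le_sum povm_pair_nonneg[of K _ d] Kc) auto
  also have "\<dots> = (\<Sum>i<m. Re (mtrace (povm K i)))"
    by (intro sum.cong refl) (simp add: povm_sum_right[OF M Kc] flip: Re_sum)
  also have "\<dots> = real d"
    using povm_sum_trace[OF M] by (simp flip: Re_sum)
  finally show "sharpness d m K \<le> 1"
    unfolding sharpness_def using d by (simp add: field_simps)
qed


lemma est_prob_pmf:
  assumes q: "0 \<le> q" "q \<le> 1"
  shows "est_prob N q P = measure_pmf.prob (binomial_pmf N q) {k. P (real k / real N)}"
proof -
  let ?B = "binomial_pmf N q"
  have sub: "set_pmf ?B \<subseteq> {..N}"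
    using set_pmf_binomial_eq[OF q, of N] by auto
  have "measure_pmf.prob ?B {k. P (real k / real N)} = measure_pmf.prob ?B ({k. P (real k / real N)} \<inter> set_pmf ?B)"
    by (rule measure_Int_set_pmf[symmetric])
  also have "{k. P (real k / real N)} \<inter> set_pmf ?B = {k. k \<le> N \<and> P (real k / real N)} \<inter> set_pmf ?B"
    using sub by auto
  also have "measure_pmf.prob ?B \<dots> = measure_pmf.prob ?B {k. k \<le> N \<and> P (real k / real N)}"
    by (rule measure_Int_set_pmf)
  also have "\<dots> = (\<Sum>k\<in>{k. k \<le> N \<and> P (real k / real N)}. pmf ?B k)"
    by (rule measure_measure_pmf_finite) auto
  also have "\<dots> = est_prob N q P"
    unfolding est_prob_def by (simp add: pmf_binomial[OF q])
  finally show ?thesis by simp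
qed

lemma est_bound:
  assumes q: "0 \<le> q" "q \<le> 1" and N: "N > 0" and e: "e \<ge> 0"
    and P: "\<And>s. \<bar>s - q\<bar> < e \<Longrightarrow> P s"
  shows "est_prob N q P \<ge> 1 - 2 * exp (- (2 * real N * e\<^sup>2))"
proof -
  let ?B = "binomial_pmf N q"
  let ?A = "{k. P (real k / real N)}"
  have bd: "binomial_distribution q" unfolding binomial_distribution_def using q by simp
  have "measure_pmf.prob ?B (UNIV - ?A) \<le> measure_pmf.prob ?B {x. e \<le> \<bar>real x / real N - q\<bar>}"
    by (intro measure_pmf.finite_measure_mono) (use P in force)+
  also have "\<dots> \<le> 2 * exp (real_of_int (- 2 * int N) * e\<^sup>2)"
    by (rule binomial_distribution.prob_abs_ge'[OF bd N e])
  also have "real_of_int (- 2 * int N) * e\<^sup>2 = - (2 * real N * e\<^sup>2)" by simp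
  finally have "measure_pmf.prob ?B (UNIV - ?A) \<le> 2 * exp (- (2 * real N * e\<^sup>2))" .
  moreover have "measure_pmf.prob ?B (UNIV - ?A) = 1 - measure_pmf.prob ?B ?A"
    using measure_pmf.prob_compl[of ?A ?B] by simp
  ultimately show ?thesis using est_prob_pmf[OF q, of N P] by simp
qed

lemma exp_neg_le: "(y::real) \<ge> 0 \<Longrightarrow> exp (- y) \<le> 1 / (1 + y)"
proof -
  assume y: "y \<ge> 0"
  have "1 + y \<le> exp y" by (rule exp_ge_add_one_self)
  hence "1 / exp y \<le> 1 / (1 + y)" using y by (intro divide_left_mono) auto
  thus ?thesis by (simp add: exp_minus field_simps)
qed


lemma smult_one_mult: "(a \<cdot>\<^sub>m 1\<^sub>m d) * (b \<cdot>\<^sub>m 1\<^sub>m d) = ((a*b)::complex) \<cdot>\<^sub>m 1\<^sub>m d"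
  by (simp add: mult_smult_assoc_mat[OF one_carrier_mat smult_carrier_mat[OF one_carrier_mat]] smult_smult_mat)

lemma random_device_agree:
  assumes d: "d > 0"
  shows "agree_prob d d (random_device d) = 1 / real d"
proof -
  define c where "c = complex_of_real (1 / sqrt (real d))"
  have R: "random_device d i = c \<cdot>\<^sub>m 1\<^sub>m d" for i unfolding random_device_def c_def by simp
  have cc: "cnj c * c = complex_of_real (1 / real d)"
    unfolding c_def using d by (simp flip: of_real_mult)
  have P: "povm (random_device d) i = complex_of_real (1 / real d) \<cdot>\<^sub>m 1\<^sub>m d" for i
    unfolding povm_def R cadj_smult cadj_one
    by (simp only: smult_one_mult cc)
  have car: "random_device d i \<in> carrier_mat d d" for i unfolding R by simp
  have nor: "normal_op (random_device d i)" for i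
    unfolding normal_op_def R cadj_smult cadj_one
    by (simp only: smult_one_mult mult.commute[of c "cnj c"])
  have tr: "Re (mtrace (povm (random_device d) i * povm (random_device d) i)) = 1 / real d" for i
  proof -
    have "mtrace (1\<^sub>m d :: complex mat) = of_nat d" by (simp add: mtrace_def)
    then show ?thesis unfolding P smult_one_mult mtrace_smult[OF one_carrier_mat] using d
      by (simp del: of_real_mult add: of_real_mult[symmetric])
  qed
  have "agree_prob d d (random_device d) = (\<Sum>i<d. 1 / real d / real d)"
    unfolding agree_prob_def
  proof (rule sum.cong[OF refl])
    fix i assume i: "i \<in> {..<d}"
    show "outcome_prob (random_device d) i (maxmixed d) *
          outcome_prob (random_device d) i (post_state (random_device d) i (maxmixed d)) = 1 / real d / real d"
      unfolding agree_term[of "random_device d" i d, OF car nor d] tr ..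
  qed
  also have "\<dots> = real d * (1 / real d / real d)"
    by (simp only: sum_constant card_lessThan)
  also have "\<dots> = 1 / real d"
  proof -
    have "real d \<noteq> 0" using d by simp
    then show ?thesis by (simp add: field_simps)
  qed
  finally show ?thesis .
qed

definition Emat :: "nat \<Rightarrow> nat \<Rightarrow> complex mat" where
  "Emat d i = Matrix.mat d d (\<lambda>(a,b). if a = i \<and> b = i then 1 else 0)"

lemma Emat_carrier[simp]: "Emat d i \<in> carrier_mat d d" by (simp add: Emat_def)
lemma Emat_adj: "cadj (Emat d i) = Emat d i" by (intro eq_matI) (auto simp: Emat_def)
lemma ind_sq: "((if P then 1 else 0) :: complex) * (if P then 1 else 0) = (if P then 1 else 0)" by simp
lemma Emat_dims[simp]: "dim_row (Emat d i) = d" "dim_col (Emat d i) = d" by (simp_all add: Emat_def)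
lemma Emat_idem: "Emat d i * Emat d i = Emat d i"
  by (intro eq_matI) (auto simp: Emat_def scalar_prod_def ind_sq intro!: sum.neutral)
lemma Emat_trace: "i < d \<Longrightarrow> mtrace (Emat d i) = 1"
  by (simp add: Emat_def mtrace_def if_distrib sum.delta' cong: if_cong)

lemma proj_device_agree:
  assumes d: "d > 0" and U: "unitary_mat d U"
  shows "agree_prob d d (proj_device d U) = 1"
proof -
  have Uc: "U \<in> carrier_mat d d" and UU: "cadj U * U = 1\<^sub>m d" using U by (auto simp: unitary_mat_def)
  have Ua: "cadj U \<in> carrier_mat d d" using Uc by simp
  have Pdef: "proj_device d U i = U * Emat d i * cadj U" for i
    unfolding proj_device_def Emat_def by simp
  have car: "proj_device d U i \<in> carrier_mat d d" for i
    unfolding Pdef using Uc Ua by (intro mult_carrier_mat[of _ d d]) auto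
  have adj: "cadj (proj_device d U i) = proj_device d U i" for i
  proof -
    have "cadj (U * Emat d i * cadj U) = cadj (cadj U) * cadj (U * Emat d i)"
      by (rule cadj_mult[OF mult_carrier_mat[OF Uc Emat_carrier] Ua])
    also have "cadj (U * Emat d i) = cadj (Emat d i) * cadj U"
      by (rule cadj_mult[OF Uc Emat_carrier])
    also have "cadj (cadj U) * (cadj (Emat d i) * cadj U) = U * Emat d i * cadj U"
      by (simp add: Emat_adj assoc_mult_mat[OF Uc Emat_carrier Ua])
    finally show ?thesis unfolding Pdef .
  qed
  have idem: "proj_device d U i * proj_device d U i = proj_device d U i" for i
  proof -
    let ?E = "Emat d i"
    have "(U * ?E * cadj U) * (U * ?E * cadj U) = U * ?E * (cadj U * (U * ?E * cadj U))"
      by (rule assoc_mult_mat[OF mult_carrier_mat[OF Uc Emat_carrier] Ua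
            mult_carrier_mat[OF mult_carrier_mat[OF Uc Emat_carrier] Ua]])
    also have "cadj U * (U * ?E * cadj U) = (cadj U * U) * ?E * cadj U"
      using Uc Ua by (simp add: assoc_mult_mat[of _ d d _ d _ d])
    also have "\<dots> = ?E * cadj U" using UU by simp
    also have "U * ?E * (?E * cadj U) = U * ?E * ?E * cadj U"
      by (rule assoc_mult_mat[symmetric, OF mult_carrier_mat[OF Uc Emat_carrier] Emat_carrier Ua])
    also have "U * ?E * ?E = U * (?E * ?E)"
      by (rule assoc_mult_mat[OF Uc Emat_carrier Emat_carrier])
    finally show ?thesis unfolding Pdef Emat_idem .
  qed
  have nor: "normal_op (proj_device d U i)" for i
    unfolding normal_op_def adj ..
  have pv: "povm (proj_device d U) i = proj_device d U i" for i
    unfolding povm_def adj idem ..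
  have tr: "i < d \<Longrightarrow> mtrace (proj_device d U i) = 1" for i
  proof -
    assume i: "i < d"
    have "mtrace (U * (Emat d i * cadj U)) = mtrace ((Emat d i * cadj U) * U)"
      by (rule mtrace_comm[OF Uc mult_carrier_mat[OF Emat_carrier Ua]])
    also have "(Emat d i * cadj U) * U = Emat d i"
      using UU by (simp add: assoc_mult_mat[OF Emat_carrier Ua Uc])
    finally show ?thesis unfolding Pdef using Emat_trace[OF i]
      by (simp add: assoc_mult_mat[OF Uc Emat_carrier Ua])
  qed
  have "agree_prob d d (proj_device d U) = (\<Sum>i<d. 1 / real d)"
    unfolding agree_prob_def
  proof (rule sum.cong[OF refl])
    fix i assume i: "i \<in> {..<d}"
    have "Re (mtrace (povm (proj_device d U) i * povm (proj_device d U) i)) = 1"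
      unfolding pv idem using tr i by simp
    then show "outcome_prob (proj_device d U) i (maxmixed d) *
          outcome_prob (proj_device d U) i (post_state (proj_device d U) i (maxmixed d)) = 1 / real d"
      unfolding agree_term[of "proj_device d U" i d, OF car nor d] by simp
  qed
  then show ?thesis using d by simp
qed


theorem theorem2:
  shows "(\<forall>\<epsilon>>0. \<forall>\<delta>>0. \<exists>N>0. \<forall>d m K. d > 0 \<longrightarrow> is_measurement d m K \<longrightarrow>
            (\<forall>i<m. normal_op (K i)) \<longrightarrow>
            est_prob N (agree_prob d m K) (\<lambda>s. \<bar>s - sharpness d m K\<bar> \<le> \<epsilon>) \<ge> 1 - \<delta>)
       \<and> (\<exists>N>0. \<forall>d\<ge>2. \<forall>U. unitary_mat d U \<longrightarrow>
            (1/2) * est_prob N (agree_prob d d (random_device d)) (\<lambda>s. s \<le> 3/4)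
          + (1/2) * est_prob N (agree_prob d d (proj_device d U)) (\<lambda>s. s > 3/4) \<ge> 2/3)"
proof
  show "\<forall>\<epsilon>>0. \<forall>\<delta>>0. \<exists>N>0. \<forall>d m K. d > 0 \<longrightarrow> is_measurement d m K \<longrightarrow>
            (\<forall>i<m. normal_op (K i)) \<longrightarrow>
            est_prob N (agree_prob d m K) (\<lambda>s. \<bar>s - sharpness d m K\<bar> \<le> \<epsilon>) \<ge> 1 - \<delta>"
  proof (intro allI impI)
    fix \<epsilon> \<delta> :: real
    assume e: "\<epsilon> > 0" and dl: "\<delta> > 0"
    define N where "N = nat \<lceil>1 / (\<epsilon>\<^sup>2 * \<delta>)\<rceil> + 1"
    have Npos: "N > 0" unfolding N_def by simp
    have NN: "real N \<ge> 1 / (\<epsilon>\<^sup>2 * \<delta>)"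
      unfolding N_def by (simp add: add_increasing real_nat_ceiling_ge)
    have ed: "\<epsilon>\<^sup>2 * \<delta> > 0" using e dl by simp
    have N1: "real N * (\<epsilon>\<^sup>2 * \<delta>) \<ge> 1"
      using NN ed by (simp add: field_simps)
    have bnd: "2 * exp (- (2 * real N * \<epsilon>\<^sup>2)) \<le> \<delta>"
    proof -
      have y0: "2 * real N * \<epsilon>\<^sup>2 \<ge> 0" by simp
      have "exp (- (2 * real N * \<epsilon>\<^sup>2)) \<le> 1 / (1 + 2 * real N * \<epsilon>\<^sup>2)"
        by (rule exp_neg_le[OF y0])
      also have "\<dots> \<le> \<delta> / 2"
      proof -
        have p: "0 < 1 + 2 * real N * \<epsilon>\<^sup>2" using y0 by linarith
        have "\<delta> * (2 * real N * \<epsilon>\<^sup>2) \<ge> 2"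
          using N1 by (simp add: algebra_simps)
        hence "2 \<le> \<delta> * (1 + 2 * real N * \<epsilon>\<^sup>2)"
          using dl by (simp add: algebra_simps)
        with p show ?thesis by (simp add: field_simps)
      qed
      finally show ?thesis by simp
    qed
    show "\<exists>N>0. \<forall>d m K. d > 0 \<longrightarrow> is_measurement d m K \<longrightarrow>
            (\<forall>i<m. normal_op (K i)) \<longrightarrow>
            est_prob N (agree_prob d m K) (\<lambda>s. \<bar>s - sharpness d m K\<bar> \<le> \<epsilon>) \<ge> 1 - \<delta>"
    proof (intro exI[of _ N] conjI allI impI Npos)
      fix d m K
      assume d: "0 < d" and M: "is_measurement d m K" and nor: "\<forall>i<m. normal_op (K i)"
      note F = measurement_facts[OF d M nor]
      have "est_prob N (agree_prob d m K) (\<lambda>s. \<bar>s - sharpness d m K\<bar> \<le> \<epsilon>)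
            \<ge> 1 - 2 * exp (- (2 * real N * \<epsilon>\<^sup>2))"
        unfolding F(1) by (rule est_bound[OF F(2) F(3) Npos]) (use e in auto)
      thus "1 - \<delta> \<le> est_prob N (agree_prob d m K) (\<lambda>s. \<bar>s - sharpness d m K\<bar> \<le> \<epsilon>)"
        using bnd by simp
    qed
  qed
next
  have e6: "2 * exp (- (2 * real (48::nat) * (1/4)\<^sup>2)) \<le> (2/7::real)"
  proof -
    have x: "exp (- (6::real)) \<le> 1 / (1 + 6)" by (rule exp_neg_le) simp
    have eq: "2 * real (48::nat) * (1/4)\<^sup>2 = (6::real)" by (simp add: power2_eq_square)
    show ?thesis unfolding eq using x by simp
  qed
  show "\<exists>N>0. \<forall>d\<ge>2. \<forall>U. unitary_mat d U \<longrightarrow>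
            (1/2) * est_prob N (agree_prob d d (random_device d)) (\<lambda>s. s \<le> 3/4)
          + (1/2) * est_prob N (agree_prob d d (proj_device d U)) (\<lambda>s. s > 3/4) \<ge> 2/3"
  proof (intro exI[of _ "48::nat"] conjI allI impI)
    fix d :: nat and U
    assume d2: "2 \<le> d" and U: "unitary_mat d U"
    have d: "d > 0" using d2 by simp
    have q1: "agree_prob d d (random_device d) = 1 / real d" by (rule random_device_agree[OF d])
    have q2: "agree_prob d d (proj_device d U) = 1" by (rule proj_device_agree[OF d U])
    have half: "1 / real d \<le> 1 / 2" using d2 by (simp add: field_simps)
    have r1: "est_prob 48 (1 / real d) (\<lambda>s. s \<le> 3/4) \<ge> 1 - 2 * exp (- (2 * real (48::nat) * (1/4)\<^sup>2))"
    proof (rule est_bound)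
      show "0 \<le> 1 / real d" by simp
      show "1 / real d \<le> 1" using half by simp
      show "0 < (48::nat)" by simp
      show "0 \<le> (1/4::real)" by simp
      fix s :: real assume "\<bar>s - 1 / real d\<bar> < 1/4"
      thus "s \<le> 3/4" using half abs_less_iff[of "s - 1 / real d" "1/4"] by linarith
    qed
    have r2: "est_prob 48 1 (\<lambda>s. s > 3/4) \<ge> 1 - 2 * exp (- (2 * real (48::nat) * (1/4)\<^sup>2))"
    proof (rule est_bound)
      fix s :: real assume "\<bar>s - 1\<bar> < 1/4"
      thus "s > 3/4" using abs_less_iff[of "s - 1" "1/4"] by linarith
    qed auto
    show "2/3 \<le> (1/2) * est_prob 48 (agree_prob d d (random_device d)) (\<lambda>s. s \<le> 3/4)
          + (1/2) * est_prob 48 (agree_prob d d (proj_device d U)) (\<lambda>s. s > 3/4)"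
      unfolding q1 q2 using r1 r2 e6 by simp
  qed simp
qed

end
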